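(* If $f\in\mathcal{U}=\mathcal{U}(1)$, then $-3\le \det T_{2,1}(f)\le 1$; and if $f\in\mathcal{U}_s=\mathcal{U}_s(1)$, then $-1\le \det T_{3,1}(f)\le 8$. All inequalities are sharp.
   Context: $\mathbb{D}=\{z\in\mathbb{C}:|z|<1\}$. $\mathcal{A}$ is the class of analytic functions $f$ on $\mathbb{D}$ with $f(0)=0$, $f'(0)=1$, written $f(z)=z+a_2z^2+a_3z^3+\cdots$. $\mathcal{U}(1)=\{f\in\mathcal{A}: |(z/f(z))^2f'(z)-1|<1 \text{ for all } z\in\mathbb{D}\}$ and $\mathcal{U}_s(1)=\{f\in\mathcal{U}(1): \frac{f(z)}{z}\prec\frac{1}{(1+z)^2}\}$, where $g\prec h$ means $g=h\circ\omega$ for some analytic $\omega:\mathbb{D}\to\mathbb{D}$ with $\omega(0)=0$. For $f\in\mathcal{A}$, $\det T_{2,1}(f)=1-|a_2|^2$ and $\det T_{3,1}(f)=2\,\mathrm{Re}(a_2^2\overline{a_3})-2|a_2|^2-|a_3|^2+1$ (determinants of the Hermitian Toeplitz matrices $\begin{pmatrix}1&a_2\\ \overline{a_2}&1\end{pmatrix}$ and $\begin{pmatrix}1&a_2&a_3\\ \overline{a_2}&1&a_2\\ \overline{a_3}&\overline{a_2}&1\end{pmatrix}$; real, possibly negative). *)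

theory Defs
  imports "HOL-Complex_Analysis.Complex_Analysis"
begin

abbreviation unit_disk :: "complex set" where
  "unit_disk \<equiv> ball 0 1"

definition classA :: "(complex \<Rightarrow> complex) \<Rightarrow> bool" where
  "classA f \<longleftrightarrow> f holomorphic_on unit_disk \<and> f 0 = 0 \<and> deriv f 0 = 1"

definition coeff :: "(complex \<Rightarrow> complex) \<Rightarrow> nat \<Rightarrow> complex" where
  "coeff f n = (deriv ^^ n) f 0 / of_nat (fact n)"

text \<open>Class U(1). The quotient z/f(z) must be meaningful, so f(z) is nonzero for
  z nonzero; at z = 0 the (removable) expression equals 0 automatically.\<close>
definition classU1 :: "(complex \<Rightarrow> complex) \<Rightarrow> bool" where
  "classU1 f \<longleftrightarrow> classA f \<and>
     (\<forall>z\<in>unit_disk. z \<noteq> 0 \<longrightarrow> f z \<noteq> 0 \<and> cmod ((z / f z)^2 * deriv f z - 1) < 1)"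

definition subordinate :: "(complex \<Rightarrow> complex) \<Rightarrow> (complex \<Rightarrow> complex) \<Rightarrow> bool" where
  "subordinate g h \<longleftrightarrow> (\<exists>\<omega>. \<omega> holomorphic_on unit_disk \<and> \<omega> ` unit_disk \<subseteq> unit_disk \<and>
      \<omega> 0 = 0 \<and> (\<forall>z\<in>unit_disk. g z = h (\<omega> z)))"

definition quot :: "(complex \<Rightarrow> complex) \<Rightarrow> complex \<Rightarrow> complex" where
  "quot f z = (if z = 0 then 1 else f z / z)"

definition classUs1 :: "(complex \<Rightarrow> complex) \<Rightarrow> bool" where
  "classUs1 f \<longleftrightarrow> classU1 f \<and> subordinate (quot f) (\<lambda>z. 1 / (1 + z)^2)"

definition detT21 :: "(complex \<Rightarrow> complex) \<Rightarrow> real" where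
  "detT21 f = 1 - (cmod (coeff f 2))^2"

definition detT31 :: "(complex \<Rightarrow> complex) \<Rightarrow> real" where
  "detT31 f = 2 * Re ((coeff f 2)^2 * cnj (coeff f 3)) - 2 * (cmod (coeff f 2))^2
              - (cmod (coeff f 3))^2 + 1"

end

theory Submission
  imports Defs
begin

lemma deriv_eq_on:
  assumes "open S" "z \<in> S" "\<And>x. x \<in> S \<Longrightarrow> f x = g x"
  shows "deriv f z = deriv g z"
  by (rule deriv_cong_ev) (use assms in \<open>auto simp: eventually_nhds\<close>)

lemma hderiv_eq_on:
  assumes "open S" "z \<in> S" "\<And>x. x \<in> S \<Longrightarrow> f x = g x"
  shows "(deriv ^^ n) f z = (deriv ^^ n) g z"
  by (rule higher_deriv_cong_ev) (use assms in \<open>auto simp: eventually_nhds\<close>)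

lemma coeff_from_g:
  assumes hg: "g holomorphic_on unit_disk" and nz: "\<And>z. z \<in> unit_disk \<Longrightarrow> g z \<noteq> 0"
    and g0: "g 0 = 1" and fe: "\<And>z. z \<in> unit_disk \<Longrightarrow> f z = z / g z"
  shows "coeff f 2 = - deriv g 0" "coeff f 3 = (deriv g 0)^2 - (deriv ^^ 2) g 0 / 2"
proof -
  define H where "H = (\<lambda>z. inverse (g z))"
  have hH: "H holomorphic_on unit_disk" unfolding H_def using hg nz by (auto intro!: holomorphic_intros)
  have hid: "(\<lambda>w. w) holomorphic_on unit_disk" by (auto intro!: holomorphic_intros)
  have 0: "(0::complex) \<in> unit_disk" by simp
  have fH: "(deriv ^^ n) f 0 = (deriv ^^ n) (\<lambda>w. w * H w) 0" for n
    by (rule hderiv_eq_on[OF _ 0]) (auto simp: fe H_def divide_inverse)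
  have n2: "(deriv ^^ 2) f 0 = 2 * deriv H 0"
    unfolding fH by (subst higher_deriv_mult[OF hid hH _ 0]) (auto simp: numeral_2_eq_2)
  have n3: "(deriv ^^ 3) f 0 = 3 * (deriv ^^ 2) H 0"
    unfolding fH by (subst higher_deriv_mult[OF hid hH _ 0]) (auto simp: numeral_3_eq_3 numeral_2_eq_2)
  have dH: "deriv H z = - deriv g z / (g z)^2" if "z \<in> unit_disk" for z
  proof -
    have "(H has_field_derivative - (deriv g z * inverse (g z ^ 2))) (at z)"
      unfolding H_def using DERIV_inverse_fun[OF holomorphic_derivI[OF hg _ that], of UNIV] nz[OF that]
      by (simp add: numeral_2_eq_2)
    then show ?thesis by (simp add: DERIV_imp_deriv divide_inverse)
  qed
  have hg1: "deriv g holomorphic_on unit_disk" using hg by (auto intro: holomorphic_deriv)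
  have d2H: "(deriv ^^ 2) H 0 = - (deriv ^^ 2) g 0 + 2 * (deriv g 0)^2"
  proof -
    have "(deriv ^^ 2) H 0 = deriv (\<lambda>z. - deriv g z / (g z)^2) 0"
      by (simp add: numeral_2_eq_2) (rule deriv_eq_on[OF _ 0], auto simp: dH power2_eq_square)
    also have "\<dots> = - (deriv ^^ 2) g 0 + 2 * (deriv g 0)^2"
    proof (rule DERIV_imp_deriv)
      have a: "(g has_field_derivative deriv g 0) (at 0)" by (rule holomorphic_derivI[OF hg _ 0]) auto
      have b: "(deriv g has_field_derivative deriv (deriv g) 0) (at 0)" by (rule holomorphic_derivI[OF hg1 _ 0]) auto
      show "((\<lambda>z. - deriv g z / (g z)^2) has_field_derivative - (deriv ^^ 2) g 0 + 2 * (deriv g 0)^2) (at 0)"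
        using DERIV_divide[OF DERIV_minus[OF b] DERIV_power[OF a, of 2]] g0
        by (simp add: numeral_2_eq_2 algebra_simps)
    qed
    finally show ?thesis .
  qed
  show "coeff f 2 = - deriv g 0" unfolding coeff_def n2 using dH[OF 0] g0 by simp
  show "coeff f 3 = (deriv g 0)^2 - (deriv ^^ 2) g 0 / 2" unfolding coeff_def n3 d2H
    by (simp add: fact_numeral field_simps)
qed

lemma W_bound:
  assumes hg: "g holomorphic_on unit_disk" and nz: "\<And>z. z \<in> unit_disk \<Longrightarrow> g z \<noteq> 0"
    and g0: "g 0 = 1" and fe: "\<And>z. z \<in> unit_disk \<Longrightarrow> f z = z / g z"
    and U: "\<And>z. z \<in> unit_disk \<Longrightarrow> z \<noteq> 0 \<Longrightarrow> cmod ((z / f z)^2 * deriv f z - 1) < 1"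
    and z: "z \<in> unit_disk"
  shows "cmod (g z - z * deriv g z - 1) < 1"
proof (cases "z = 0")
  case True then show ?thesis using g0 by simp
next
  case False
  have a: "(g has_field_derivative deriv g z) (at z)" by (rule holomorphic_derivI[OF hg _ z]) auto
  have "deriv f z = deriv (\<lambda>z. z / g z) z" by (rule deriv_eq_on[OF _ z]) (auto simp: fe)
  also have "\<dots> = (g z - z * deriv g z) / (g z)^2"
  proof (rule DERIV_imp_deriv)
    show "((\<lambda>z. z / g z) has_field_derivative (g z - z * deriv g z) / (g z)^2) (at z)"
      using DERIV_divide[OF DERIV_ident a] nz[OF z] by (simp add: power2_eq_square)
  qed
  finally have df: "deriv f z = (g z - z * deriv g z) / (g z)^2" .
  have "z / f z = g z" using fe[OF z] False nz[OF z] by simp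
  then have "(z / f z)^2 * deriv f z - 1 = g z - z * deriv g z - 1"
    using df nz[OF z] by (simp add: field_simps)
  then show ?thesis using U[OF z False] by simp
qed

lemma le_2_from_r:
  fixes x :: real
  assumes "\<And>r. 0 < r \<Longrightarrow> r < 1 \<Longrightarrow> x \<le> 2 / r^2"
  shows "x \<le> 2"
proof (rule ccontr)
  assume "\<not> x \<le> 2"
  hence x: "x > 2" by simp
  define s where "s = (1 + 2/x) / 2"
  have s1: "2/x < s" "s < 1" using x by (auto simp: s_def field_simps)
  have s0: "0 < s" using s1 x by (smt (verit) divide_pos_pos)
  have "x \<le> 2 / (sqrt s)^2" using assms[of "sqrt s"] s0 s1 by auto
  also have "\<dots> = 2 / s" using s0 by simp
  also have "\<dots> < x" using s1 s0 x by (simp add: field_simps)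
  finally show False by simp
qed

lemma b2_bound:
  assumes hg: "g holomorphic_on unit_disk"
    and W: "\<And>z. z \<in> unit_disk \<Longrightarrow> cmod (g z - z * deriv g z - 1) < 1"
  shows "cmod ((deriv ^^ 2) g 0) \<le> 2"
proof -
  define W where "W = (\<lambda>z. g z - z * deriv g z - 1)"
  have 0: "(0::complex) \<in> unit_disk" by simp
  have hg1: "deriv g holomorphic_on unit_disk" using hg by (auto intro: holomorphic_deriv)
  have hg2: "deriv (deriv g) holomorphic_on unit_disk" using hg1 by (auto intro: holomorphic_deriv)
  have hW: "W holomorphic_on unit_disk" unfolding W_def using hg hg1 by (auto intro!: holomorphic_intros)
  have dW: "deriv W z = - z * deriv (deriv g) z" if z: "z \<in> unit_disk" for z
  proof (rule DERIV_imp_deriv)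
    have a: "(g has_field_derivative deriv g z) (at z)" by (rule holomorphic_derivI[OF hg _ z]) auto
    have b: "(deriv g has_field_derivative deriv (deriv g) z) (at z)" by (rule holomorphic_derivI[OF hg1 _ z]) auto
    show "(W has_field_derivative - z * deriv (deriv g) z) (at z)" unfolding W_def
      using DERIV_diff[OF DERIV_diff[OF a DERIV_mult[OF DERIV_ident b]] DERIV_const[of 1]]
      by (simp add: algebra_simps)
  qed
  have d2W: "(deriv ^^ 2) W 0 = - (deriv ^^ 2) g 0"
  proof -
    have "(deriv ^^ 2) W 0 = deriv (\<lambda>z. - z * deriv (deriv g) z) 0"
      by (simp add: numeral_2_eq_2) (rule deriv_eq_on[OF _ 0], auto simp: dW)
    also have "\<dots> = - (deriv ^^ 2) g 0"
    proof (rule DERIV_imp_deriv)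
      have b: "(deriv (deriv g) has_field_derivative deriv (deriv (deriv g)) 0) (at 0)"
        by (rule holomorphic_derivI[OF hg2 _ 0]) auto
      show "((\<lambda>z. - z * deriv (deriv g) z) has_field_derivative - (deriv ^^ 2) g 0) (at 0)"
        using DERIV_mult[OF DERIV_minus[OF DERIV_ident] b] by (simp add: numeral_2_eq_2)
    qed
    finally show ?thesis .
  qed
  have "cmod ((deriv ^^ 2) W 0) \<le> 2 / r^2" if r: "0 < r" "r < 1" for r
  proof -
    have "cmod ((deriv ^^ 2) W 0) \<le> fact 2 * 1 / r^2"
    proof (rule Cauchy_inequality)
      show "W holomorphic_on ball 0 r" using r by (intro holomorphic_on_subset[OF hW]) auto
      show "continuous_on (cball 0 r) W"
        using r by (intro holomorphic_on_imp_continuous_on holomorphic_on_subset[OF hW]) auto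
      show "\<And>x. cmod (0 - x) = r \<Longrightarrow> cmod (W x) \<le> 1"
        using W r unfolding W_def by (auto intro: less_imp_le)
    qed (use r in auto)
    then show ?thesis by simp
  qed
  then have "cmod ((deriv ^^ 2) W 0) \<le> 2" by (rule le_2_from_r)
  then show ?thesis using d2W by simp
qed

lemma W_deriv:
  assumes hg: "g holomorphic_on unit_disk" and z: "z \<in> unit_disk"
  shows "((\<lambda>z. g z - z * deriv g z - 1) has_field_derivative - z * deriv (deriv g) z) (at z)"
proof -
  have hg1: "deriv g holomorphic_on unit_disk" using hg by (auto intro: holomorphic_deriv)
  have a: "(g has_field_derivative deriv g z) (at z)" by (rule holomorphic_derivI[OF hg _ z]) auto
  have b: "(deriv g has_field_derivative deriv (deriv g) z) (at z)" by (rule holomorphic_derivI[OF hg1 _ z]) auto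
  show ?thesis
    using DERIV_diff[OF DERIV_diff[OF a DERIV_mult[OF DERIV_ident b]] DERIV_const[of 1]]
    by (simp add: algebra_simps)
qed

lemma W_sq_bound:
  assumes hW: "W holomorphic_on unit_disk" and W0: "W 0 = 0" and dW0: "deriv W 0 = 0"
    and Wb: "\<And>z. z \<in> unit_disk \<Longrightarrow> cmod (W z) < 1"
    and z: "z \<in> unit_disk"
  shows "cmod (W z) \<le> cmod z ^ 2"
proof -
  have strict: "cmod (W z) < cmod z" if zz: "cmod z < 1" "z \<noteq> 0" for z
  proof -
    have le: "cmod (W z) \<le> cmod z" using Schwarz_Lemma(1)[OF hW W0 _ that(1)] Wb by auto
    show ?thesis
    proof (rule ccontr)
      assume "\<not> ?thesis"
      hence "cmod (W z) = cmod z" using le by simp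
      then obtain \<alpha> where \<alpha>: "\<And>z. cmod z < 1 \<Longrightarrow> W z = \<alpha> * z" "cmod \<alpha> = 1"
        using Schwarz_Lemma(3)[OF hW W0 _ zz(1)] Wb zz by force
      have "deriv W 0 = deriv (\<lambda>z. \<alpha> * z) 0" by (rule deriv_eq_on[of unit_disk]) (auto simp: \<alpha>)
      hence "deriv W 0 = \<alpha>" by simp
      thus False using dW0 \<alpha>(2) by simp
    qed
  qed
  define V where "V = (\<lambda>z. if z = 0 then deriv W 0 else (W z - W 0) / (z - 0))"
  have hV: "V holomorphic_on unit_disk" unfolding V_def by (rule pole_lemma[OF hW]) auto
  have V0: "V 0 = 0" using dW0 by (simp add: V_def)
  have Vb: "cmod (V z) < 1" if "cmod z < 1" for z
    using strict[OF that] V0 by (cases "z = 0") (auto simp: V_def W0 norm_divide divide_less_eq)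
  have "cmod (V z) \<le> cmod z" using Schwarz_Lemma(1)[OF hV V0 Vb] z by auto
  then show ?thesis
    by (cases "z = 0") (auto simp: V_def W0 norm_divide divide_le_eq power2_eq_square)
qed

lemma aux: "s^2 = B^2 - 4 \<Longrightarrow> (B - s)/2 * (B - (B-s)/2) = (1::real)"
proof -
  assume h: "s^2 = B^2 - 4"
  have "(B - s)/2 * (B - (B-s)/2) = (B^2 - s^2)/4" by (simp add: power2_eq_square field_simps)
  then show ?thesis using h by simp
qed

lemma a2_bound:
  assumes hg: "g holomorphic_on unit_disk" and nz: "\<And>z. z \<in> unit_disk \<Longrightarrow> g z \<noteq> 0"
    and g0: "g 0 = 1"
    and Wb: "\<And>z. z \<in> unit_disk \<Longrightarrow> cmod (g z - z * deriv g z - 1) < 1"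
  shows "cmod (deriv g 0) \<le> 2"
proof -
  define W where "W = (\<lambda>z. g z - z * deriv g z - 1)"
  have 0: "(0::complex) \<in> unit_disk" by simp
  have hg1: "deriv g holomorphic_on unit_disk" using hg by (auto intro: holomorphic_deriv)
  have hW: "W holomorphic_on unit_disk" unfolding W_def using hg hg1 by (auto intro!: holomorphic_intros)
  have W0: "W 0 = 0" using g0 by (simp add: W_def)
  have dW0: "deriv W 0 = 0" unfolding W_def using DERIV_imp_deriv[OF W_deriv[OF hg 0]] by simp
  have Wsq: "cmod (W z) \<le> cmod z ^ 2" if "z \<in> unit_disk" for z
    by (rule W_sq_bound[OF hW W0 dW0 _ that]) (use Wb in \<open>auto simp: W_def\<close>)
  define ch where "ch = (\<lambda>z. if z = 0 then deriv g 0 else (g z - g 0) / (z - 0))"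
  have hch: "ch holomorphic_on unit_disk" unfolding ch_def by (rule pole_lemma[OF hg]) auto
  have hch1: "deriv ch holomorphic_on unit_disk" using hch by (auto intro: holomorphic_deriv)
  have gch: "g z = 1 + z * ch z" if "z \<in> unit_disk" for z
    by (cases "z = 0") (auto simp: ch_def g0)
  have dch: "cmod (deriv ch z) \<le> 1" if z: "z \<in> unit_disk" for z
  proof (cases "z = 0")
    case False
    have "deriv ch z = deriv (\<lambda>z. (g z - 1) / z) z"
      by (rule deriv_eq_on[of "unit_disk - {0}"]) (use z False in \<open>auto simp: ch_def g0\<close>)
    also have "\<dots> = - W z / z^2"
    proof (rule DERIV_imp_deriv)
      have a: "(g has_field_derivative deriv g z) (at z)" by (rule holomorphic_derivI[OF hg _ z]) auto
      show "((\<lambda>z. (g z - 1) / z) has_field_derivative - W z / z^2) (at z)"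
        using DERIV_divide[OF DERIV_diff[OF a DERIV_const[of 1]] DERIV_ident] False
        by (simp add: W_def power2_eq_square field_simps)
    qed
    finally have "cmod (deriv ch z) = cmod (W z) / cmod z ^ 2" by (simp add: norm_divide norm_power)
    also have "\<dots> \<le> 1" using Wsq[OF z] False by (simp add: divide_le_eq)
    finally show ?thesis .
  next
    case True
    have "(deriv ^^ 2) g 0 = (deriv ^^ 2) (\<lambda>z. 1 + z * ch z) 0"
      by (rule hderiv_eq_on[OF _ 0]) (auto simp: gch)
    also have "\<dots> = 2 * deriv ch 0"
      apply (subst higher_deriv_add[of "\<lambda>_. 1" unit_disk "\<lambda>z. z * ch z"])
          apply (use hch in \<open>auto intro!: holomorphic_intros\<close>)[4]
      apply (subst higher_deriv_mult[of "\<lambda>z. z" unit_disk ch])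
          apply (use hch in \<open>auto intro!: holomorphic_intros\<close>)[4]
      by (simp add: numeral_2_eq_2)
    finally have e: "(deriv ^^ 2) g 0 = 2 * deriv ch 0" .
    have "cmod ((deriv ^^ 2) g 0) = 2 * cmod (deriv ch 0)" unfolding e by (simp add: norm_mult)
    moreover have "cmod ((deriv ^^ 2) g 0) \<le> 2" by (rule b2_bound[OF hg Wb])
    ultimately show ?thesis using True by simp
  qed
  have chb: "cmod (ch z - deriv g 0) \<le> cmod z" if z: "z \<in> unit_disk" for z
  proof -
    have "cmod (ch z - ch 0) \<le> 1 * cmod (z - 0)"
    proof (rule field_differentiable_bound[of unit_disk])
      show "\<And>z. z \<in> unit_disk \<Longrightarrow> (ch has_field_derivative deriv ch z) (at z within unit_disk)"
        by (rule holomorphic_derivI[OF hch]) auto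
    qed (use z dch in auto)
    then show ?thesis by (simp add: ch_def)
  qed
  show ?thesis
  proof (rule ccontr)
    define B where "B = cmod (deriv g 0)"
    assume "\<not> ?thesis"
    hence B2: "B > 2" by (simp add: B_def)
    define r where "r = (B - sqrt (B^2 - 4)) / 2"
    have "sqrt (B^2 - 4) < sqrt (B^2)" by (subst real_sqrt_less_iff) simp
    hence sq: "sqrt (B^2 - 4) < B" using B2 by simp
    have sq2: "B - 2 < sqrt (B^2 - 4)"
      using B2 by (intro real_less_rsqrt) (simp add: power2_eq_square algebra_simps)
    have r0: "0 < r" "r < 1" using sq sq2 by (auto simp: r_def)
    have rB: "r * (B - r) = 1"
    proof -
      have "B * B > 2 * 2" using B2 by (intro mult_strict_mono) auto
      hence "(sqrt (B^2 - 4))^2 = B^2 - 4" by (simp add: power2_eq_square)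
      then show ?thesis unfolding r_def by (rule aux)
    qed
    have cb: "z \<in> unit_disk" if "z \<in> cball 0 r" for z using that r0 by auto
    have lowb: "cmod (ch z) \<ge> B - r" if "z \<in> cball 0 r" for z
    proof -
      have "cmod (ch z - deriv g 0) \<le> r" using chb[OF cb[OF that]] that by auto
      moreover have "cmod (deriv g 0) \<le> cmod (ch z) + cmod (ch z - deriv g 0)"
        using norm_triangle_ineq4[of "ch z" "ch z - deriv g 0"] by simp
      ultimately show ?thesis unfolding B_def by linarith
    qed
    have Br: "B - r > 0" using r0 B2 by simp
    define T where "T = (\<lambda>z. - 1 / ch z)"
    obtain z where z: "z \<in> cball 0 r" "T z = z"
    proof (rule brouwer_ball[where e=r and f=T and a=0])
      have contch: "continuous_on (cball 0 r) ch"
        by (rule holomorphic_on_imp_continuous_on, rule holomorphic_on_subset[OF hch]) (use cb in auto)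
      show "continuous_on (cball 0 r) T" unfolding T_def
        by (rule continuous_on_divide[OF continuous_on_const contch]) (use lowb Br in force)
      show "T \<in> cball 0 r \<rightarrow> cball 0 r"
      proof
        fix x :: complex assume x: "x \<in> cball 0 r"
        have "cmod (T x) = 1 / cmod (ch x)" by (simp add: T_def norm_divide)
        also have "\<dots> \<le> 1 / (B - r)" using lowb[OF x] Br by (intro divide_left_mono) (auto intro!: mult_pos_pos)
        also have "\<dots> = r" using rB Br by (simp add: field_simps)
        finally show "T x \<in> cball 0 r" by simp
      qed
    qed (use r0 in auto)
    have "ch z \<noteq> 0" using lowb[OF z(1)] Br by force
    moreover have "z * ch z = (-1 / ch z) * ch z" using z(2) by (simp add: T_def)
    ultimately have "z * ch z = -1" by simp
    then have "g z = 0" using gch[OF cb[OF z(1)]] by simp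
    then show False using nz[OF cb[OF z(1)]] by simp
  qed
qed

lemma det_identity:
  fixes a b :: complex
  shows "2 * Re (a^2 * cnj b) - 2 * (cmod a)^2 - (cmod b)^2 + 1 = (1 - (cmod a)^2)^2 - (cmod (a^2 - b))^2"
  by (simp only: cmod_power2) (simp add: power2_eq_square algebra_simps)

lemma moebius_ident:
  fixes a b :: complex
  shows "(cmod (1 - cnj b * a))^2 - (cmod (a - b))^2 = (1 - (cmod a)^2) * (1 - (cmod b)^2)"
  by (simp only: cmod_power2) (simp add: power2_eq_square algebra_simps)

lemma moebius_lt1:
  fixes a b :: complex
  assumes "cmod a < 1" "cmod b < 1"
  shows "cmod ((a - b) / (1 - cnj b * a)) < 1"
proof -
  have "(1 - (cmod a)^2) * (1 - (cmod b)^2) > 0"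
    using assms by (intro mult_pos_pos) (auto simp: power_less_one_iff abs_square_less_1)
  then have "(cmod (a - b))^2 < (cmod (1 - cnj b * a))^2" using moebius_ident[of b a] by linarith
  then have "cmod (a - b) < cmod (1 - cnj b * a)" by (rule power2_less_imp_less) simp
  then show ?thesis by (simp add: norm_divide divide_less_eq)
qed

lemma final_alg:
  fixes c1 c2 :: complex
  assumes h1: "cmod c1 \<le> 1" and h2: "cmod c2 \<le> 1 - (cmod c1)^2" and h3: "cmod (c1^2 + 2 * c2) \<le> 1"
  shows "-1 \<le> (1 - (cmod (-2 * c1))^2)^2 - (cmod (c1^2 + 2 * c2))^2"
    and "(1 - (cmod (-2 * c1))^2)^2 - (cmod (c1^2 + 2 * c2))^2 \<le> 8"
proof -
  define t where "t = (cmod c1)^2"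
  have t: "0 \<le> t" "t \<le> 1" using h1 by (auto simp: t_def power_le_one)
  have tt: "t * t \<le> 1" using mult_mono[of t 1 t 1] t by auto
  have a2: "(cmod (-2 * c1))^2 = 4 * t" by (simp add: t_def norm_mult power_mult_distrib)
  have b0: "0 \<le> cmod (c1^2 + 2 * c2)" by simp
  show "-1 \<le> (1 - (cmod (-2 * c1))^2)^2 - (cmod (c1^2 + 2 * c2))^2"
  proof -
    have "(cmod (c1^2 + 2 * c2))^2 \<le> 1" using h3 b0 by (simp add: power_le_one)
    then show ?thesis by (smt (verit) zero_le_power2)
  qed
  have lb: "cmod (c1^2 + 2 * c2) \<ge> t - 2 * (1 - t)"
  proof -
    have "cmod (c1^2) \<le> cmod (c1^2 + 2 * c2) + cmod (2 * c2)"
      using norm_triangle_ineq4[of "c1^2 + 2*c2" "2*c2"] by simp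
    moreover have "cmod (c1^2) = t" by (simp add: t_def norm_power)
    moreover have "cmod (2 * c2) \<le> 2 * (1 - t)" using h2 by (simp add: norm_mult t_def)
    ultimately show ?thesis by linarith
  qed
  show "(1 - (cmod (-2 * c1))^2)^2 - (cmod (c1^2 + 2 * c2))^2 \<le> 8"
  proof (cases "3 * t \<ge> 2")
    case True
    then have "(3*t - 2)^2 \<le> (cmod (c1^2 + 2 * c2))^2" using lb by (intro power_mono) auto
    moreover have "(1 - 4*t)^2 - (3*t-2)^2 \<le> 8" using t tt by (simp add: power2_eq_square algebra_simps)
    ultimately show ?thesis unfolding a2 by linarith
  next
    case False
    then have "(1 - 4*t)^2 \<le> 8" 
    proof -
      have "t * t \<le> t * (2/3)" using False t by (intro mult_left_mono) auto
      then show ?thesis using t False by (simp add: power2_eq_square algebra_simps)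
    qed
    then show ?thesis unfolding a2 by (smt (verit) zero_le_power2)
  qed
qed

lemma omega_bounds:
  assumes hw: "w holomorphic_on unit_disk" and wD: "w ` unit_disk \<subseteq> unit_disk" and w0: "w 0 = 0"
  shows "cmod (deriv w 0) \<le> 1" "cmod ((deriv ^^ 2) w 0 / 2) \<le> 1 - (cmod (deriv w 0))^2"
proof -
  have 0: "(0::complex) \<in> unit_disk" by simp
  have wb: "cmod (w z) < 1" if "cmod z < 1" for z
  proof -
    have "z \<in> unit_disk" using that by simp
    hence "w z \<in> unit_disk" using wD by blast
    thus ?thesis by simp
  qed
  show c1: "cmod (deriv w 0) \<le> 1" using Schwarz_Lemma(2)[OF hw w0 wb, of 0] by simp
  define c where "c = deriv w 0"
  show "cmod ((deriv ^^ 2) w 0 / 2) \<le> 1 - (cmod (deriv w 0))^2"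
  proof (cases "cmod c = 1")
    case True
    then obtain \<alpha> where \<alpha>: "\<And>z. cmod z < 1 \<Longrightarrow> w z = \<alpha> * z"
      using Schwarz_Lemma(3)[OF hw w0 wb, of 0] by (auto simp: c_def)
    have "(deriv ^^ 2) w 0 = (deriv ^^ 2) (\<lambda>z. \<alpha> * z) 0"
      by (rule hderiv_eq_on[OF _ 0]) (auto simp: \<alpha>)
    then show ?thesis using True by (simp add: c_def)
  next
    case False
    hence c1': "cmod c < 1" using c1 by (simp add: c_def)
    define p where "p = (\<lambda>z. if z = 0 then deriv w 0 else (w z - w 0) / (z - 0))"
    have hp: "p holomorphic_on unit_disk" unfolding p_def by (rule pole_lemma[OF hw]) auto
    have wp: "w z = z * p z" if "z \<in> unit_disk" for z by (cases "z = 0") (auto simp: p_def w0)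
    have d2: "(deriv ^^ 2) w 0 = 2 * deriv p 0"
    proof -
      have "(deriv ^^ 2) w 0 = (deriv ^^ 2) (\<lambda>z. z * p z) 0"
        by (rule hderiv_eq_on[OF _ 0]) (auto simp: wp)
      also have "\<dots> = 2 * deriv p 0"
        by (subst higher_deriv_mult[of "\<lambda>z. z" unit_disk p]) (use hp in \<open>auto intro!: holomorphic_intros simp: numeral_2_eq_2\<close>)
      finally show ?thesis .
    qed
    have pb: "cmod (p z) < 1" if z: "cmod z < 1" for z
    proof (cases "z = 0")
      case True then show ?thesis using c1' by (simp add: p_def c_def)
    next
      case nz: False
      have le: "cmod (w z) \<le> cmod z" using Schwarz_Lemma(1)[OF hw w0 wb z] .
      have "cmod (w z) \<noteq> cmod z"
      proof
        assume eq: "cmod (w z) = cmod z"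
        obtain \<alpha> where \<alpha>: "\<And>z. cmod z < 1 \<Longrightarrow> w z = \<alpha> * z" "cmod \<alpha> = 1"
          using Schwarz_Lemma(3)[OF hw w0 wb z] eq nz z by force
        have "deriv w 0 = deriv (\<lambda>z. \<alpha> * z) 0" by (rule deriv_eq_on[OF _ 0]) (auto simp: \<alpha>)
        hence "c = \<alpha>" by (simp add: c_def)
        thus False using False \<alpha>(2) by simp
      qed
      hence "cmod (w z) < cmod z" using le by simp
      then show ?thesis using nz by (simp add: p_def w0 norm_divide divide_less_eq)
    qed
    have p0: "p 0 = c" by (simp add: p_def c_def)
    define q where "q = (\<lambda>z. (p z - c) / (1 - cnj c * p z))"
    have den: "1 - cnj c * p z \<noteq> 0" if "cmod z < 1" for z
    proof
      assume "1 - cnj c * p z = 0"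
      hence "cmod (cnj c * p z) = 1" by (metis eq_iff_diff_eq_0 norm_one)
      moreover have "cmod (cnj c * p z) < 1"
        using c1' pb[OF that] by (simp add: norm_mult) (metis mult_strict_mono' norm_ge_zero mult_1_left)
      ultimately show False by simp
    qed
    have hq: "q holomorphic_on unit_disk" unfolding q_def using hp den by (auto intro!: holomorphic_intros)
    have q0: "q 0 = 0" by (simp add: q_def p0)
    have qb: "cmod (q z) < 1" if "cmod z < 1" for z
      unfolding q_def by (rule moebius_lt1[OF pb[OF that] c1'])
    have dq: "cmod (deriv q 0) \<le> 1" using Schwarz_Lemma(2)[OF hq q0 qb, of 0] by simp
    have cc0: "cnj c * c = complex_of_real ((cmod c)^2)"
      by (subst complex_norm_square) (rule mult.commute)
    have cc: "1 - cnj c * c = complex_of_real (1 - (cmod c)^2)"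
      by (simp only: cc0 of_real_diff of_real_1)
    have cpos: "1 - (cmod c)^2 > 0" using c1' by (simp add: abs_square_less_1)
    have "deriv q 0 = deriv p 0 / (1 - cnj c * c)"
    proof (rule DERIV_imp_deriv)
      have a: "(p has_field_derivative deriv p 0) (at 0)" by (rule holomorphic_derivI[OF hp _ 0]) auto
      have den0: "1 - cnj c * p 0 \<noteq> 0" using den[of 0] by simp
      have D: "(q has_field_derivative ((deriv p 0 - 0) * (1 - cnj c * p 0) - (p 0 - c) * (0 - cnj c * deriv p 0))
                 / ((1 - cnj c * p 0) * (1 - cnj c * p 0))) (at 0)"
        unfolding q_def
        by (rule DERIV_divide[OF DERIV_diff[OF a DERIV_const[of c]] DERIV_diff[OF DERIV_const[of 1] DERIV_cmult[OF a, of "cnj c"]] den0])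
      have k: "1 - cnj c * c \<noteq> 0" using den0 p0 by simp
      have "((deriv p 0 - 0) * (1 - cnj c * p 0) - (p 0 - c) * (0 - cnj c * deriv p 0))
                 / ((1 - cnj c * p 0) * (1 - cnj c * p 0)) = (deriv p 0 * (1 - cnj c * c)) / ((1 - cnj c * c) * (1 - cnj c * c))"
        by (simp add: p0)
      also have "\<dots> = deriv p 0 / (1 - cnj c * c)"
        using k by (subst nonzero_mult_divide_mult_cancel_right) auto
      finally show "(q has_field_derivative deriv p 0 / (1 - cnj c * c)) (at 0)"
        using D by simp
    qed
    then have "deriv q 0 = deriv p 0 / complex_of_real (1 - (cmod c)^2)" unfolding cc .
    then have "cmod (deriv q 0) = cmod (deriv p 0) / (1 - (cmod c)^2)"
      using cpos by (simp only: norm_divide norm_of_real abs_of_pos)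
    then have "cmod (deriv p 0) \<le> 1 - (cmod c)^2"
      using dq cpos by (simp add: divide_le_eq)
    then show ?thesis using d2 by (simp add: c_def norm_mult)
  qed
qed

lemma g_from_omega:
  assumes hw: "w holomorphic_on unit_disk" and w0: "w 0 = 0"
    and hg: "g holomorphic_on unit_disk" and ge: "\<And>z. z \<in> unit_disk \<Longrightarrow> g z = (1 + w z)^2"
  shows "deriv g 0 = 2 * deriv w 0" "(deriv ^^ 2) g 0 = 2 * (deriv w 0)^2 + 2 * (deriv ^^ 2) w 0"
proof -
  have 0: "(0::complex) \<in> unit_disk" by simp
  have hw1: "deriv w holomorphic_on unit_disk" using hw by (auto intro: holomorphic_deriv)
  have dg: "deriv g z = 2 * (1 + w z) * deriv w z" if z: "z \<in> unit_disk" for z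
  proof -
    have a: "(w has_field_derivative deriv w z) (at z)" by (rule holomorphic_derivI[OF hw _ z]) auto
    have "deriv g z = deriv (\<lambda>z. (1 + w z)^2) z" by (rule deriv_eq_on[OF _ z]) (auto simp: ge)
    also have "\<dots> = 2 * (1 + w z) * deriv w z"
      by (rule DERIV_imp_deriv) (use DERIV_power[OF DERIV_add[OF DERIV_const[of 1] a], where n=2] in \<open>simp add: algebra_simps\<close>)
    finally show ?thesis .
  qed
  show "deriv g 0 = 2 * deriv w 0" using dg[OF 0] w0 by simp
  have "(deriv ^^ 2) g 0 = deriv (\<lambda>z. 2 * (1 + w z) * deriv w z) 0"
    by (simp add: numeral_2_eq_2) (rule deriv_eq_on[OF _ 0], auto simp: dg)
  also have "\<dots> = 2 * (deriv w 0)^2 + 2 * (deriv ^^ 2) w 0"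
  proof (rule DERIV_imp_deriv)
    have a: "(w has_field_derivative deriv w 0) (at 0)" by (rule holomorphic_derivI[OF hw _ 0]) auto
    have b: "(deriv w has_field_derivative deriv (deriv w) 0) (at 0)" by (rule holomorphic_derivI[OF hw1 _ 0]) auto
    show "((\<lambda>z. 2 * (1 + w z) * deriv w z) has_field_derivative 2 * (deriv w 0)^2 + 2 * (deriv ^^ 2) w 0) (at 0)"
      using DERIV_mult[OF DERIV_cmult[OF DERIV_add[OF DERIV_const[of 1] a], where c=2] b] w0
      by (simp add: numeral_2_eq_2 algebra_simps power2_eq_square)
  qed
  finally show "(deriv ^^ 2) g 0 = 2 * (deriv w 0)^2 + 2 * (deriv ^^ 2) w 0" .
qed

lemma U_expr:
  assumes hg: "g holomorphic_on unit_disk" and nz: "\<And>z. z \<in> unit_disk \<Longrightarrow> g z \<noteq> 0"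
    and fe: "\<And>z. z \<in> unit_disk \<Longrightarrow> f z = z / g z"
    and z: "z \<in> unit_disk" and z0: "z \<noteq> 0"
  shows "(z / f z)^2 * deriv f z - 1 = g z - z * deriv g z - 1"
proof -
  have a: "(g has_field_derivative deriv g z) (at z)" by (rule holomorphic_derivI[OF hg _ z]) auto
  have "deriv f z = deriv (\<lambda>z. z / g z) z" by (rule deriv_eq_on[OF _ z]) (auto simp: fe)
  also have "\<dots> = (g z - z * deriv g z) / (g z)^2"
  proof (rule DERIV_imp_deriv)
    show "((\<lambda>z. z / g z) has_field_derivative (g z - z * deriv g z) / (g z)^2) (at z)"
      using DERIV_divide[OF DERIV_ident a] nz[OF z] by (simp add: power2_eq_square)
  qed
  finally have df: "deriv f z = (g z - z * deriv g z) / (g z)^2" .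
  have "z / f z = g z" using fe[OF z] z0 nz[OF z] by simp
  then show ?thesis using df nz[OF z] by (simp add: field_simps)
qed

lemma quad_example:
  fixes \<beta> \<gamma> :: complex
  assumes nz: "\<And>z. z \<in> unit_disk \<Longrightarrow> 1 + \<beta> * z + \<gamma> * z^2 \<noteq> 0" and gam: "cmod \<gamma> \<le> 1"
  shows "classU1 (\<lambda>z. z / (1 + \<beta> * z + \<gamma> * z^2))"
    "coeff (\<lambda>z. z / (1 + \<beta> * z + \<gamma> * z^2)) 2 = - \<beta>"
    "coeff (\<lambda>z. z / (1 + \<beta> * z + \<gamma> * z^2)) 3 = \<beta>^2 - \<gamma>"
proof -
  define g where "g = (\<lambda>z::complex. 1 + \<beta> * z + \<gamma> * z^2)"
  define f where "f = (\<lambda>z. z / g z)"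
  have hg: "g holomorphic_on unit_disk" unfolding g_def by (auto intro!: holomorphic_intros)
  have nz': "\<And>z. z \<in> unit_disk \<Longrightarrow> g z \<noteq> 0" using nz by (simp add: g_def)
  have g0: "g 0 = 1" by (simp add: g_def)
  have dg: "deriv g = (\<lambda>z. \<beta> + 2 * \<gamma> * z)"
  proof
    fix z :: complex
    show "deriv g z = \<beta> + 2 * \<gamma> * z" unfolding g_def
      by (rule DERIV_imp_deriv) (auto intro!: derivative_eq_intros simp: algebra_simps)
  qed
  have d2g: "(deriv ^^ 2) g 0 = 2 * \<gamma>"
  proof -
    have "(deriv ^^ 2) g 0 = deriv (\<lambda>z. \<beta> + 2 * \<gamma> * z) 0" by (simp add: numeral_2_eq_2 dg)
    also have "\<dots> = 2 * \<gamma>" by (rule DERIV_imp_deriv) (auto intro!: derivative_eq_intros)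
    finally show ?thesis .
  qed
  have fe: "\<And>z. z \<in> unit_disk \<Longrightarrow> f z = z / g z" by (simp add: f_def)
  have "classU1 f"
    unfolding classU1_def classA_def
  proof (intro conjI ballI impI)
    show "f holomorphic_on unit_disk" unfolding f_def using hg nz' by (auto intro!: holomorphic_intros)
    show "f 0 = 0" by (simp add: f_def)
    show "deriv f 0 = 1" unfolding f_def
      by (rule DERIV_imp_deriv) (use g0 in \<open>auto intro!: derivative_eq_intros simp: g_def\<close>)
    fix z assume z: "z \<in> unit_disk" and z0: "z \<noteq> 0"
    show "f z \<noteq> 0" using nz'[OF z] z0 by (simp add: f_def)
    have "(z / f z)^2 * deriv f z - 1 = g z - z * deriv g z - 1" by (rule U_expr[OF hg nz' fe z z0])
    also have "\<dots> = - \<gamma> * z^2" unfolding dg by (simp add: g_def power2_eq_square algebra_simps)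
    finally have "cmod ((z / f z)^2 * deriv f z - 1) = cmod \<gamma> * (cmod z)^2" by (simp add: norm_mult norm_power)
    also have "\<dots> \<le> 1 * (cmod z)^2" using gam by (intro mult_right_mono) auto
    also have "\<dots> < 1" using z z0 by (simp add: power_less_one_iff abs_square_less_1)
    finally show "cmod ((z / f z)^2 * deriv f z - 1) < 1" .
  qed
  then show "classU1 (\<lambda>z. z / (1 + \<beta> * z + \<gamma> * z^2))" by (simp add: f_def g_def)
  have "coeff f 2 = - \<beta>" using coeff_from_g(1)[OF hg nz' g0 fe] by (simp add: dg)
  then show "coeff (\<lambda>z. z / (1 + \<beta> * z + \<gamma> * z^2)) 2 = - \<beta>" by (simp add: f_def g_def)
  have "coeff f 3 = \<beta>^2 - \<gamma>" using coeff_from_g(2)[OF hg nz' g0 fe] by (simp add: dg d2g)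
  then show "coeff (\<lambda>z. z / (1 + \<beta> * z + \<gamma> * z^2)) 3 = \<beta>^2 - \<gamma>" by (simp add: f_def g_def)
qed

lemma g3_notnonpos:
  assumes z: "cmod z < 1"
  shows "1 - z + z^2 \<notin> \<real>\<^sub>\<le>\<^sub>0"
proof
  assume a: "1 - z + z^2 \<in> \<real>\<^sub>\<le>\<^sub>0"
  define x where "x = Re z"
  define y where "y = Im z"
  have zz: "z = Complex x y" by (simp add: x_def y_def)
  have e: "1 - z + z^2 = Complex (1 - x + x*x - y*y) (2*x*y - y)"
    unfolding zz by (simp add: power2_eq_square complex_eq_iff)
  have im: "2*x*y - y = 0" and re: "1 - x + x*x - y*y \<le> 0"
    using a unfolding e complex_nonpos_Reals_iff by auto
  have n: "x*x + y*y < 1" using z by (simp add: cmod_def x_def y_def power2_eq_square)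
  have "y * (2*x - 1) = 0" using im by (simp add: algebra_simps)
  then have "y = 0 \<or> 2*x - 1 = 0" by simp
  then show False
  proof
    assume "y = 0"
    with re have "1 - x + x*x \<le> 0" by simp
    moreover have "1 - x + x*x = (x - 1/2)*(x - 1/2) + 3/4" by (simp add: algebra_simps)
    moreover have "(x - 1/2)*(x - 1/2) \<ge> 0" by simp
    ultimately show False by linarith
  next
    assume "2*x - 1 = 0"
    hence "x = 1/2" by simp
    with re n show False by simp
  qed
qed

lemma g3_aux:
  assumes z: "cmod z < 1"
  shows "(cmod (z - 1))^2 \<le> 1 + cmod (1 - z + z^2)"
proof -
  define x where "x = Re z"
  define y where "y = Im z"
  have zz: "z = Complex x y" by (simp add: x_def y_def)
  have e: "1 - z + z^2 = Complex (1 - x + x*x - y*y) (2*x*y - y)"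
    unfolding zz by (simp add: power2_eq_square complex_eq_iff)
  have n: "x*x + y*y < 1" using z by (simp add: cmod_def x_def y_def power2_eq_square)
  have e1: "(cmod (z - 1))^2 = x*x + y*y - 2*x + 1"
    unfolding zz by (simp only: cmod_power2) (simp add: power2_eq_square algebra_simps)
  define N where "N = cmod (1 - z + z^2)"
  have N0: "N \<ge> 0" by (simp add: N_def)
  have eN: "N^2 = (1 - x + x*x - y*y)^2 + (2*x*y - y)^2"
    unfolding N_def e by (simp only: cmod_power2 complex.sel)
  show ?thesis
  proof (cases "x > 1/2")
    case True
    then show ?thesis using e1 n N0 by (simp add: N_def[symmetric])
  next
    case False
    have id: "N^2 - (x*x + y*y - 2*x)^2 = (1 - (x*x + y*y)) * (1 - 2*x)"
      unfolding eN by (simp add: power2_eq_square algebra_simps)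
    have "(1 - (x*x + y*y)) * (1 - 2*x) \<ge> 0"
      using False n by (intro mult_nonneg_nonneg) auto
    hence "(x*x + y*y - 2*x)^2 \<le> N^2" using id by linarith
    hence "x*x + y*y - 2*x \<le> N"
      using N0 by (metis abs_le_square_iff abs_of_nonneg abs_ge_self order_trans)
    then show ?thesis using e1 by (simp add: N_def[symmetric])
  qed
qed

lemma g3_sqrt_bound:
  assumes z: "cmod z < 1"
  shows "cmod (csqrt (1 - z + z^2) - 1) < 1"
proof -
  define G where "G = 1 - z + z^2"
  define h where "h = csqrt G"
  have nn: "G \<notin> \<real>\<^sub>\<le>\<^sub>0" using g3_notnonpos[OF z] by (simp add: G_def)
  have h2: "h^2 = G" by (simp add: h_def)
  have reh: "Re h > 0"
  proof (rule ccontr)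
    assume "\<not> Re h > 0"
    hence r0: "Re h = 0" using csqrt_principal[of G] by (auto simp: h_def)
    have "h = Complex 0 (Im h)" using r0 by (simp add: complex_eq_iff)
    hence "h^2 = Complex (- (Im h * Im h)) 0" by (simp add: power2_eq_square complex_eq_iff)
    hence "G \<in> \<real>\<^sub>\<le>\<^sub>0" unfolding h2 by (simp add: complex_nonpos_Reals_iff)
    thus False using nn by simp
  qed
  have nh: "(cmod h)^2 = cmod G" by (simp add: h_def)
  have hp1: "(cmod (h + 1))^2 = (cmod h)^2 + 2 * Re h + 1"
    by (simp only: cmod_power2) (simp add: power2_eq_square algebra_simps)
  have A: "(cmod (z - 1))^2 \<le> 1 + cmod G" using g3_aux[OF z] by (simp add: G_def)
  have B: "(cmod (z^2 - z))^2 \<le> (cmod (z - 1))^2"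
  proof -
    have "z^2 - z = z * (z - 1)" by (simp add: power2_eq_square algebra_simps)
    hence "cmod (z^2 - z) = cmod z * cmod (z - 1)" by (simp add: norm_mult)
    also have "\<dots> \<le> 1 * cmod (z - 1)" using z by (intro mult_right_mono) auto
    finally show ?thesis by (simp add: power_mono)
  qed
  have lt: "(cmod (z^2 - z))^2 < (cmod (h + 1))^2" using A B hp1 nh reh by linarith
  have hne: "h + 1 \<noteq> 0" using reh by (auto simp: complex_eq_iff)
  have "h - 1 = (h^2 - 1) / (h + 1)" using hne by (simp add: power2_eq_square field_simps)
  also have "h^2 - 1 = z^2 - z" by (simp add: h2 G_def)
  finally have "cmod (h - 1) = cmod (z^2 - z) / cmod (h + 1)" by (simp add: norm_divide)
  also have "\<dots> < 1"
  proof -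
    have "cmod (z^2 - z) < cmod (h + 1)" using lt by (rule power2_less_imp_less) simp
    then show ?thesis using hne by (simp add: divide_less_eq)
  qed
  finally show ?thesis by (simp add: h_def G_def)
qed

lemma U1_setup:
  assumes "classU1 f"
  obtains g where "g holomorphic_on unit_disk" "\<And>z. z \<in> unit_disk \<Longrightarrow> g z \<noteq> 0" "g 0 = 1"
    "\<And>z. z \<in> unit_disk \<Longrightarrow> f z = z / g z"
    "\<And>z. z \<in> unit_disk \<Longrightarrow> cmod (g z - z * deriv g z - 1) < 1"
    "\<And>z. g z = inverse (quot f z)"
proof -
  define g where "g = (\<lambda>z. inverse (quot f z))"
  have A: "f holomorphic_on unit_disk" "f 0 = 0" "deriv f 0 = 1"
    and U: "\<And>z. z \<in> unit_disk \<Longrightarrow> z \<noteq> 0 \<Longrightarrow> f z \<noteq> 0 \<and> cmod ((z / f z)^2 * deriv f z - 1) < 1"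
    using assms(1) by (auto simp: classU1_def classA_def)
  have qe: "quot f = (\<lambda>z. if z = 0 then deriv f 0 else (f z - f 0) / (z - 0))"
    using A by (auto simp: quot_def fun_eq_iff)
  have hQ: "quot f holomorphic_on unit_disk" unfolding qe by (rule pole_lemma[OF A(1)]) auto
  have Qnz: "quot f z \<noteq> 0" if "z \<in> unit_disk" for z
    using U[OF that] by (auto simp: quot_def)
  have hg: "g holomorphic_on unit_disk" unfolding g_def using hQ Qnz by (auto intro!: holomorphic_intros)
  have nz: "\<And>z. z \<in> unit_disk \<Longrightarrow> g z \<noteq> 0" using Qnz by (simp add: g_def)
  have g0: "g 0 = 1" by (simp add: g_def quot_def)
  have fe: "\<And>z. z \<in> unit_disk \<Longrightarrow> f z = z / g z"
    using A(2) by (auto simp: g_def quot_def divide_inverse)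
  have "\<And>z. z \<in> unit_disk \<Longrightarrow> cmod (g z - z * deriv g z - 1) < 1"
    by (rule W_bound[OF hg nz g0 fe]) (use U in auto)
  then show ?thesis using that[OF hg nz g0 fe] by (simp add: g_def)
qed

theorem mainTheorem3:
  shows "(\<forall>f. classU1 f \<longrightarrow> -3 \<le> detT21 f \<and> detT21 f \<le> 1)
       \<and> (\<exists>f. classU1 f \<and> detT21 f = -3)
       \<and> (\<exists>f. classU1 f \<and> detT21 f = 1)
       \<and> (\<forall>f. classUs1 f \<longrightarrow> -1 \<le> detT31 f \<and> detT31 f \<le> 8)
       \<and> (\<exists>f. classUs1 f \<and> detT31 f = -1)
       \<and> (\<exists>f. classUs1 f \<and> detT31 f = 8)"
proof (intro conjI allI impI)
  fix f assume f: "classU1 f"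
  obtain g where S: "g holomorphic_on unit_disk" "\<And>z. z \<in> unit_disk \<Longrightarrow> g z \<noteq> 0" "g 0 = 1"
    "\<And>z. z \<in> unit_disk \<Longrightarrow> f z = z / g z"
    "\<And>z. z \<in> unit_disk \<Longrightarrow> cmod (g z - z * deriv g z - 1) < 1"
    "\<And>z. g z = inverse (quot f z)" using U1_setup[OF f] by blast
  have "coeff f 2 = - deriv g 0" by (rule coeff_from_g(1)[OF S(1-4)])
  moreover have "cmod (deriv g 0) \<le> 2" by (rule a2_bound[OF S(1-3) S(5)])
  ultimately have "cmod (coeff f 2) \<le> 2" by simp
  then have "(cmod (coeff f 2))^2 \<le> 2^2" by (intro power_mono) auto
  then show "-3 \<le> detT21 f" by (simp add: detT21_def)
  show "detT21 f \<le> 1" by (simp add: detT21_def)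
next
  have nz: "1 + (-2) * z + 1 * z^2 \<noteq> 0" if "z \<in> unit_disk" for z :: complex
  proof -
    have "1 + (-2) * z + 1 * z^2 = (1 - z)^2" by (simp add: power2_eq_square algebra_simps)
    moreover have "z \<noteq> 1" using that by auto
    ultimately show ?thesis by simp
  qed
  note Q = quad_example[OF nz, simplified]
  show "\<exists>f. classU1 f \<and> detT21 f = -3"
    by (rule exI[of _ "\<lambda>z. z / (1 + (-2) * z + 1 * z^2)"]) (use Q in \<open>simp add: detT21_def\<close>)
next
  note Q = quad_example[of 0 0, simplified]
  show "\<exists>f. classU1 f \<and> detT21 f = 1"
    by (rule exI[of _ "\<lambda>z. z / 1"]) (use Q in \<open>simp add: detT21_def\<close>)
next
  fix f assume f: "classUs1 f"
  then have fU: "classU1 f" by (simp add: classUs1_def)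
  obtain w where hw: "w holomorphic_on unit_disk" and wD: "w ` unit_disk \<subseteq> unit_disk" and w0: "w 0 = 0"
    and qw: "\<And>z. z \<in> unit_disk \<Longrightarrow> quot f z = 1 / (1 + w z)^2"
    using f by (auto simp: classUs1_def subordinate_def)
  obtain g where S: "g holomorphic_on unit_disk" "\<And>z. z \<in> unit_disk \<Longrightarrow> g z \<noteq> 0" "g 0 = 1"
    "\<And>z. z \<in> unit_disk \<Longrightarrow> f z = z / g z"
    "\<And>z. z \<in> unit_disk \<Longrightarrow> cmod (g z - z * deriv g z - 1) < 1"
    "\<And>z. g z = inverse (quot f z)" using U1_setup[OF fU] by blast
  have ge: "g z = (1 + w z)^2" if "z \<in> unit_disk" for z
    using qw[OF that] by (simp add: S(6))
  note O = g_from_omega[OF hw w0 S(1) ge]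
  note WB = omega_bounds[OF hw wD w0]
  define c1 where "c1 = deriv w 0"
  define c2 where "c2 = (deriv ^^ 2) w 0 / 2"
  have a2: "coeff f 2 = -2 * c1" using coeff_from_g(1)[OF S(1-4)] O by (simp add: c1_def)
  have a3: "coeff f 3 = 3 * c1^2 - 2 * c2"
  proof -
    have "coeff f 3 = (2 * c1)^2 - (2 * (c1^2 + 2 * c2)) / 2"
      using coeff_from_g(2)[OF S(1-4)] O by (simp add: c1_def c2_def)
    also have "(2 * (c1^2 + 2 * c2)) / 2 = c1^2 + 2 * c2" by simp
    finally show ?thesis by (simp add: power2_eq_square algebra_simps)
  qed
  have b2: "(coeff f 2)^2 - coeff f 3 = c1^2 + 2 * c2" unfolding a2 a3 by (simp add: power2_eq_square algebra_simps)
  have g2: "cmod ((deriv ^^ 2) g 0) \<le> 2" by (rule b2_bound[OF S(1) S(5)])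
  have e: "(deriv ^^ 2) g 0 = 2 * (c1^2 + 2 * c2)" using O by (simp add: c1_def c2_def algebra_simps)
  have "cmod (2 * (c1^2 + 2 * c2)) \<le> 2" using g2 unfolding e .
  then have h3: "cmod (c1^2 + 2 * c2) \<le> 1" unfolding norm_mult by simp
  have h1: "cmod c1 \<le> 1" using WB(1) by (simp add: c1_def)
  have h2: "cmod c2 \<le> 1 - (cmod c1)^2" using WB(2) by (simp add: c1_def c2_def)
  have det: "detT31 f = (1 - (cmod (-2 * c1))^2)^2 - (cmod (c1^2 + 2 * c2))^2"
    unfolding detT31_def det_identity b2[symmetric] a2 ..
  show "-1 \<le> detT31 f" unfolding det by (rule final_alg(1)[OF h1 h2 h3])
  show "detT31 f \<le> 8" unfolding det by (rule final_alg(2)[OF h1 h2 h3])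
next
  define f where "f = (\<lambda>z::complex. z / (1 + (-1) * z + 1 * z^2))"
  have nz: "1 + (-1) * z + 1 * z^2 \<noteq> 0" if "z \<in> unit_disk" for z :: complex
  proof -
    have "1 - z + z^2 \<notin> \<real>\<^sub>\<le>\<^sub>0" using g3_notnonpos[of z] that by simp
    then show ?thesis by auto
  qed
  note Q = quad_example[OF nz, folded f_def, simplified]
  have "classUs1 f"
    unfolding classUs1_def subordinate_def
  proof (intro conjI exI[of _ "\<lambda>z. csqrt (1 - z + z^2) - 1"])
    show "classU1 f" using Q by simp
    show "(\<lambda>z. csqrt (1 - z + z^2) - 1) holomorphic_on unit_disk"
      using g3_notnonpos by (auto intro!: holomorphic_intros)
    show "(\<lambda>z. csqrt (1 - z + z^2) - 1) ` unit_disk \<subseteq> unit_disk"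
      using g3_sqrt_bound by auto
    show "csqrt (1 - 0 + 0^2) - 1 = 0" by simp
    show "\<forall>z\<in>unit_disk. quot f z = 1 / (1 + (csqrt (1 - z + z^2) - 1))^2"
      by (auto simp: quot_def f_def)
  qed
  moreover have "detT31 f = -1" using Q by (simp add: detT31_def)
  ultimately show "\<exists>f. classUs1 f \<and> detT31 f = -1" by blast
next
  define f where "f = (\<lambda>z::complex. z / (1 + 2 * z + 1 * z^2))"
  have nz: "1 + 2 * z + 1 * z^2 \<noteq> 0" if "z \<in> unit_disk" for z :: complex
  proof -
    have "1 + 2 * z + 1 * z^2 = (1 + z)^2" by (simp add: power2_eq_square algebra_simps)
    moreover have "z \<noteq> -1" using that by auto
    ultimately show ?thesis by (simp add: add_eq_0_iff)
  qed
  note Q = quad_example[OF nz, folded f_def, simplified]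
  have "classUs1 f"
    unfolding classUs1_def subordinate_def
  proof (intro conjI exI[of _ "\<lambda>z. z"])
    show "classU1 f" using Q by simp
    show "\<forall>z\<in>unit_disk. quot f z = 1 / (1 + z)^2"
    proof
      fix z :: complex assume "z \<in> unit_disk"
      have e: "1 + 2 * z + z^2 = (1 + z)^2" by (simp add: power2_eq_square algebra_simps)
      show "quot f z = 1 / (1 + z)^2" by (cases "z = 0") (simp_all add: quot_def f_def e)
    qed
  qed auto
  moreover have "detT31 f = 8" using Q by (simp add: detT31_def)
  ultimately show "\<exists>f. classUs1 f \<and> detT31 f = 8" by blast
qed

end
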